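(* For a selection $\mathtt{SEL}$ of the consistent set map, the chasing properties satisfy the implications (C) $\Rightarrow$ (A), (C) $\Rightarrow$ (D), (A) $\Rightarrow$ (B), and (D) $\Rightarrow$ (B); the reverse (and any other) implications between these properties do not hold in general.
   Context: $(\mathbb{T},\mathsf{K},d)$ is a compact parametrization of a set $\mathcal{F}$ of functions $\mathbb{N}\times\mathcal{X}\times\mathcal{U}\to\mathcal{X}$: $(\mathsf{K},d)$ compact metric, $\mathbb{T}:\mathsf{K}\to2^{\mathcal{F}}$, $\mathcal{F}\subseteq\bigcup_\theta\mathbb{T}[\theta]$. For a finite data set $\mathcal{D}$ of points $(t,x^+,x,u)$, $\mathsf{P}(\mathcal{D})$ is the closure of $\{\theta\in\mathsf{K}:\exists f\in\mathbb{T}[\theta],\ x^+=f(t,x,u)\ \forall(t,x^+,x,u)\in\mathcal{D}\}$; $\mathtt{SEL}$ is a selection if $\mathtt{SEL}[\mathcal{D}]\in\mathsf{P}(\mathcal{D})$. A property below holds for $\mathtt{SEL}$ if it holds for every data stream $\mathcal{D}_t=(d_1,\dots,d_t)$ for which some $f\in\mathcal{F}$ is consistent with all $\mathcal{D}_t$, with $\theta_t=\mathtt{SEL}[\mathcal{D}_t]$: (A) $\lim_t\theta_t$ exists; (B) $\lim_t d(\theta_t,\theta_{t-1})=0$; (C) ($\gamma$-competitive, some $\gamma$) $\sum_{t=t_1+1}^{t_2}d(\theta_t,\theta_{t-1})\le\gamma d_H(\mathsf{P}(\mathcal{D}_{t_2}),\mathsf{P}(\mathcal{D}_{t_1}))$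 for all $t_1<t_2$; (D) ($(\gamma,T)$-weakly competitive) the same inequality for all $t_1<t_2$ with $t_2-t_1\le T$. $d_H$ is the Hausdorff distance. *)

theory Defs
  imports "HOL-Analysis.Analysis"
begin

text \<open>Functions N x X x U -> X and data points (t, x+, x, u).\<close>
type_synonym ('x,'u) dynfun = "nat \<Rightarrow> 'x \<Rightarrow> 'u \<Rightarrow> 'x"
type_synonym ('x,'u) datum = "nat \<times> 'x \<times> 'x \<times> 'u"

definition hausdorff_dist :: "'a::metric_space set \<Rightarrow> 'a set \<Rightarrow> real" where
  "hausdorff_dist A B = max (SUP a\<in>A. infdist a B) (SUP b\<in>B. infdist b A)"

definition consistent :: "('x,'u) dynfun \<Rightarrow> ('x,'u) datum set \<Rightarrow> bool" where
  "consistent f D \<longleftrightarrow> (\<forall>(t,xp,x,u)\<in>D. xp = f t x u)"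

text \<open>(T, K, d) is a compact parametrization of F; the metric d is the one of the type 'k.\<close>
definition compact_parametrization ::
  "'k::metric_space set \<Rightarrow> ('k \<Rightarrow> ('x,'u) dynfun set) \<Rightarrow> ('x,'u) dynfun set \<Rightarrow> bool" where
  "compact_parametrization K T F \<longleftrightarrow>
     compact K \<and> (\<forall>\<theta>\<in>K. T \<theta> \<subseteq> F) \<and> F \<subseteq> (\<Union>\<theta>\<in>K. T \<theta>)"

definition consistent_set ::
  "'k::metric_space set \<Rightarrow> ('k \<Rightarrow> ('x,'u) dynfun set) \<Rightarrow> ('x,'u) datum set \<Rightarrow> 'k set" where
  "consistent_set K T D = closure {\<theta>\<in>K. \<exists>f\<in>T \<theta>. consistent f D}"

definition is_selection ::
  "'k::metric_space set \<Rightarrow> ('k \<Rightarrow> ('x,'u) dynfun set) \<Rightarrow> (('x,'u) datum set \<Rightarrow> 'k) \<Rightarrow> bool" where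
  "is_selection K T SEL \<longleftrightarrow>
     (\<forall>D. finite D \<and> consistent_set K T D \<noteq> {} \<longrightarrow> SEL D \<in> consistent_set K T D)"

definition stream_data :: "(nat \<Rightarrow> ('x,'u) datum) \<Rightarrow> nat \<Rightarrow> ('x,'u) datum set" where
  "stream_data d t = d ` {1..t}"

definition admissible_stream :: "('x,'u) dynfun set \<Rightarrow> (nat \<Rightarrow> ('x,'u) datum) \<Rightarrow> bool" where
  "admissible_stream F d \<longleftrightarrow> (\<exists>f\<in>F. \<forall>t. consistent f (stream_data d t))"

definition chase_A where
  "chase_A K T F SEL \<longleftrightarrow> (\<forall>d. admissible_stream F d \<longrightarrow>
      convergent (\<lambda>t. SEL (stream_data d t) :: 'k::metric_space))"

definition chase_B where
  "chase_B K T F SEL \<longleftrightarrow> (\<forall>d. admissible_stream F d \<longrightarrow>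
      (\<lambda>t. dist (SEL (stream_data d (Suc t))) (SEL (stream_data d t) :: 'k::metric_space))
        \<longlonglongrightarrow> 0)"

definition competitive_ineq ::
  "'k::metric_space set \<Rightarrow> ('k \<Rightarrow> ('x,'u) dynfun set) \<Rightarrow> (('x,'u) datum set \<Rightarrow> 'k)
     \<Rightarrow> real \<Rightarrow> (nat \<Rightarrow> ('x,'u) datum) \<Rightarrow> nat \<Rightarrow> nat \<Rightarrow> bool" where
  "competitive_ineq K T SEL \<gamma> d t1 t2 \<longleftrightarrow>
     (\<Sum>t\<in>{t1<..t2}. dist (SEL (stream_data d t)) (SEL (stream_data d (t - 1))))
       \<le> \<gamma> * hausdorff_dist (consistent_set K T (stream_data d t2)) (consistent_set K T (stream_data d t1))"

definition chase_C where
  "chase_C K T F SEL \<longleftrightarrow> (\<exists>\<gamma>. \<forall>d. admissible_stream F d \<longrightarrow>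
      (\<forall>t1 t2. t1 < t2 \<longrightarrow> competitive_ineq K T SEL \<gamma> d t1 t2))"

definition chase_D where
  "chase_D K T F SEL \<longleftrightarrow> (\<exists>\<gamma> (N::nat). N \<ge> 1 \<and> (\<forall>d. admissible_stream F d \<longrightarrow>
      (\<forall>t1 t2. t1 < t2 \<and> t2 - t1 \<le> N \<longrightarrow> competitive_ineq K T SEL \<gamma> d t1 t2)))"

end

theory Submission
  imports Defs
begin

lemma P_sub_K:
  assumes "compact K"
  shows "consistent_set K T D \<subseteq> K"
  unfolding consistent_set_def
  by (rule closure_minimal) (auto intro: compact_imp_closed[OF assms])

lemma P_closed: "closed (consistent_set K T D)"
  unfolding consistent_set_def by simp

lemma consistent_mono: "consistent f D' \<Longrightarrow> D \<subseteq> D' \<Longrightarrow> consistent f D"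
  unfolding consistent_def by blast

lemma P_mono: "D \<subseteq> D' \<Longrightarrow> consistent_set K T D' \<subseteq> consistent_set K T D"
  unfolding consistent_set_def by (rule closure_mono) (auto intro: consistent_mono)

lemma stream_mono: "t \<le> t' \<Longrightarrow> stream_data d t \<subseteq> stream_data d t'"
  unfolding stream_data_def by auto

lemma stream_finite: "finite (stream_data d t)"
  unfolding stream_data_def by simp

lemma adm_theta0:
  assumes "compact_parametrization K T F" "admissible_stream F d"
  shows "\<exists>\<theta>0\<in>K. \<forall>t. \<theta>0 \<in> consistent_set K T (stream_data d t)"
proof -
  from assms(2) obtain f where f: "f \<in> F" "\<And>t. consistent f (stream_data d t)"
    unfolding admissible_stream_def by blast
  from assms(1) f(1) obtain \<theta>0 where "\<theta>0 \<in> K" "f \<in> T \<theta>0"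
    unfolding compact_parametrization_def by blast
  then have "\<theta>0 \<in> consistent_set K T (stream_data d t)" for t
    unfolding consistent_set_def using f(2) by (auto intro: closure_subset[THEN subsetD])
  with \<open>\<theta>0 \<in> K\<close> show ?thesis by blast
qed

lemma sel_in:
  assumes "compact_parametrization K T F" "admissible_stream F d" "is_selection K T SEL"
  shows "SEL (stream_data d t) \<in> consistent_set K T (stream_data d t)"
proof -
  obtain \<theta>0 where "\<theta>0 \<in> consistent_set K T (stream_data d t)"
    using adm_theta0[OF assms(1,2)] by blast
  then have "consistent_set K T (stream_data d t) \<noteq> {}" by blast
  then show ?thesis using assms(3) stream_finite unfolding is_selection_def by blast
qed

lemma infdist_le_diam:
  assumes "bounded K" "a \<in> K" "B \<subseteq> K" "B \<noteq> {}"
  shows "infdist a B \<le> diameter K"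
proof -
  obtain b where b: "b \<in> B" using assms by blast
  then have "infdist a B \<le> dist a b" by (rule infdist_le)
  also have "\<dots> \<le> diameter K" using assms b by (intro diameter_bounded_bound) auto
  finally show ?thesis .
qed

lemma hd_bdd:
  assumes "bounded K" "A \<subseteq> K" "B \<subseteq> K" "B \<noteq> {}"
  shows "bdd_above ((\<lambda>a. infdist a B) ` A)"
  using infdist_le_diam[OF assms(1) _ assms(3,4)] assms(2) by (auto intro!: bdd_aboveI2)

lemma hd_ge2:
  assumes "bounded K" "A \<subseteq> K" "B \<subseteq> K" "A \<noteq> {}" "b \<in> B"
  shows "infdist b A \<le> hausdorff_dist A B"
proof -
  have "infdist b A \<le> (SUP b\<in>B. infdist b A)"
    by (rule cSUP_upper[OF assms(5) hd_bdd[OF assms(1,3,2,4)]])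
  then show ?thesis unfolding hausdorff_dist_def by simp
qed

lemma hd_nonneg:
  assumes "bounded K" "A \<subseteq> K" "B \<subseteq> K" "A \<noteq> {}" "B \<noteq> {}"
  shows "0 \<le> hausdorff_dist A B"
proof -
  obtain b where "b \<in> B" using assms by blast
  then show ?thesis using hd_ge2[OF assms(1-4)] infdist_nonneg[of b A] by force
qed

lemma hd_le:
  assumes "A \<noteq> {}" "B \<noteq> {}" "\<And>a. a \<in> A \<Longrightarrow> infdist a B \<le> e" "\<And>b. b \<in> B \<Longrightarrow> infdist b A \<le> e"
  shows "hausdorff_dist A B \<le> e"
  unfolding hausdorff_dist_def using assms by (auto intro!: cSUP_least)

lemma hd_le_diam:
  assumes "bounded K" "A \<subseteq> K" "B \<subseteq> K" "A \<noteq> {}" "B \<noteq> {}"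
  shows "hausdorff_dist A B \<le> diameter K"
  using assms by (intro hd_le infdist_le_diam) auto

lemma sum_shift0: "(\<Sum>t\<in>{0<..n}. f t) = (\<Sum>i<n. f (Suc i))"
proof -
  have "{0<..n} = Suc ` {..<n}"
    apply (auto simp: image_iff)
    by (rule_tac x="x - 1" in bexI) auto
  then show ?thesis by (simp add: sum.reindex)
qed

lemma dist_le_sum:
  fixes \<theta> :: "nat \<Rightarrow> 'a::metric_space"
  shows "m \<le> n \<Longrightarrow> dist (\<theta> m) (\<theta> n) \<le> (\<Sum>i\<in>{m..<n}. dist (\<theta> (Suc i)) (\<theta> i))"
proof (induction n)
  case 0 then show ?case by simp
next
  case (Suc n)
  show ?case
  proof (cases "m = Suc n")
    case True then show ?thesis by simp
  next
    case False
    then have "m \<le> n" using Suc.prems by simp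
    have "dist (\<theta> m) (\<theta> (Suc n)) \<le> dist (\<theta> m) (\<theta> n) + dist (\<theta> (Suc n)) (\<theta> n)"
      by (metis dist_commute dist_triangle)
    also have "\<dots> \<le> (\<Sum>i\<in>{m..<n}. dist (\<theta> (Suc i)) (\<theta> i)) + dist (\<theta> (Suc n)) (\<theta> n)"
      using Suc.IH[OF \<open>m \<le> n\<close>] by simp
    also have "\<dots> = (\<Sum>i\<in>{m..<Suc n}. dist (\<theta> (Suc i)) (\<theta> i))"
      using \<open>m \<le> n\<close> by simp
    finally show ?thesis .
  qed
qed

lemma summable_dist_Cauchy:
  fixes \<theta> :: "nat \<Rightarrow> 'a::metric_space"
  assumes "summable (\<lambda>i. dist (\<theta> (Suc i)) (\<theta> i))"
  shows "Cauchy \<theta>"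
proof (rule metric_CauchyI)
  fix e :: real assume "0 < e"
  with assms obtain N where N: "\<And>m n. m \<ge> N \<Longrightarrow> norm (\<Sum>i\<in>{m..<n}. dist (\<theta> (Suc i)) (\<theta> i)) < e"
    unfolding summable_Cauchy by blast
  have "dist (\<theta> m) (\<theta> n) < e" if "m \<ge> N" "n \<ge> N" for m n
  proof (cases "m \<le> n")
    case True
    then show ?thesis using dist_le_sum[OF True, of \<theta>] N[OF that(1), of n]
      by (smt (verit) real_norm_def sum_nonneg zero_le_dist)
  next
    case False
    then have "n \<le> m" by simp
    then show ?thesis using dist_le_sum[OF \<open>n \<le> m\<close>, of \<theta>] N[OF that(2), of m]
      by (smt (verit) dist_commute real_norm_def sum_nonneg zero_le_dist)
  qed
  then show "\<exists>M. \<forall>m\<ge>M. \<forall>n\<ge>M. dist (\<theta> m) (\<theta> n) < e" by blast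
qed

lemma C_imp_A:
  assumes cp: "compact_parametrization K T F" and sel: "is_selection K T SEL" and C: "chase_C K T F SEL"
  shows "chase_A K T F SEL"
  unfolding chase_A_def
proof (intro allI impI)
  fix d assume adm: "admissible_stream F d"
  from C obtain \<gamma> where g: "\<And>t1 t2. t1 < t2 \<Longrightarrow> competitive_ineq K T SEL \<gamma> d t1 t2"
    using adm unfolding chase_C_def by blast
  have K: "compact K" using cp unfolding compact_parametrization_def by simp
  hence bK: "bounded K" by (rule compact_imp_bounded)
  define \<theta> where "\<theta> t = SEL (stream_data d t)" for t
  define P where "P t = consistent_set K T (stream_data d t)" for t
  obtain \<theta>0 where th0a: "\<theta>0 \<in> K" and th0b: "\<forall>t. \<theta>0 \<in> consistent_set K T (stream_data d t)"
    using adm_theta0[OF cp adm] by blast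
  have th0: "\<theta>0 \<in> K" "\<theta>0 \<in> P t" for t using th0a th0b unfolding P_def by auto
  have PK: "P t \<subseteq> K" for t using P_sub_K[OF K] P_def by simp
  have Pne: "P t \<noteq> {}" for t using th0 by blast
  have thK: "\<theta> t \<in> K" for t using sel_in[OF cp adm sel, of t] PK[of t] unfolding \<theta>_def P_def by blast
  have hd: "hausdorff_dist (P t2) (P t1) \<le> diameter K" for t1 t2
    using hd_le_diam[OF bK PK PK Pne Pne] .
  have hd0: "0 \<le> hausdorff_dist (P t2) (P t1)" for t1 t2
    using hd_nonneg[OF bK PK PK Pne Pne] .
  have dg: "0 \<le> diameter K" using th0(1) bK by (auto intro: diameter_ge_0)
  have bnd: "(\<Sum>i<n. dist (\<theta> (Suc i)) (\<theta> i)) \<le> \<bar>\<gamma>\<bar> * diameter K" for n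
  proof (cases "n = 0")
    case True then show ?thesis using dg by simp
  next
    case False
    have "(\<Sum>i<n. dist (\<theta> (Suc i)) (\<theta> i)) = (\<Sum>t\<in>{0<..n}. dist (\<theta> t) (\<theta> (t - 1)))"
      by (simp add: sum_shift0)
    also have "\<dots> \<le> \<gamma> * hausdorff_dist (P n) (P 0)"
      using g[of 0 n] False unfolding competitive_ineq_def \<theta>_def P_def by simp
    also have "\<dots> \<le> \<bar>\<gamma>\<bar> * hausdorff_dist (P n) (P 0)"
      using hd0[of n 0] by (intro mult_right_mono) auto
    also have "\<dots> \<le> \<bar>\<gamma>\<bar> * diameter K"
      using hd[of n 0] by (intro mult_left_mono) auto
    finally show ?thesis .
  qed
  have "summable (\<lambda>i. dist (\<theta> (Suc i)) (\<theta> i))"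
    by (rule summableI_nonneg_bounded[OF _ bnd]) simp
  then have "Cauchy \<theta>" by (rule summable_dist_Cauchy)
  moreover have "complete K" using K by (rule compact_imp_complete)
  ultimately obtain l where "\<theta> \<longlonglongrightarrow> l" using thK unfolding complete_def by blast
  then show "convergent (\<lambda>t. SEL (stream_data d t))" unfolding convergent_def \<theta>_def by blast
qed

lemma C_imp_D:
  assumes "chase_C K T F SEL"
  shows "chase_D K T F SEL"
  using assms unfolding chase_C_def chase_D_def by (meson order_refl)

lemma A_imp_B:
  assumes "chase_A K T F SEL"
  shows "chase_B K T F SEL"
  unfolding chase_B_def
proof (intro allI impI)
  fix d assume "admissible_stream F d"
  with assms obtain l where l: "(\<lambda>t. SEL (stream_data d t)) \<longlonglongrightarrow> l"
    unfolding chase_A_def convergent_def by blast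
  have "(\<lambda>t. dist (SEL (stream_data d (Suc t))) (SEL (stream_data d t))) \<longlonglongrightarrow> dist l l"
    by (intro tendsto_dist LIMSEQ_Suc l)
  then show "(\<lambda>t. dist (SEL (stream_data d (Suc t))) (SEL (stream_data d t))) \<longlonglongrightarrow> 0" by simp
qed

lemma D_imp_B:
  assumes cp: "compact_parametrization K T F" and sel: "is_selection K T SEL" and D: "chase_D K T F SEL"
  shows "chase_B K T F SEL"
  unfolding chase_B_def
proof (intro allI impI)
  fix d assume adm: "admissible_stream F d"
  from D obtain \<gamma> N where N: "N \<ge> 1" and g: "\<And>t1 t2. t1 < t2 \<Longrightarrow> t2 - t1 \<le> N \<Longrightarrow> competitive_ineq K T SEL \<gamma> d t1 t2"
    using adm unfolding chase_D_def by blast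
  have K: "compact K" using cp unfolding compact_parametrization_def by simp
  hence bK: "bounded K" by (rule compact_imp_bounded)
  define \<theta> where "\<theta> t = SEL (stream_data d t)" for t
  define P where "P t = consistent_set K T (stream_data d t)" for t
  obtain \<theta>0 where th0a: "\<theta>0 \<in> K" and th0b: "\<forall>t. \<theta>0 \<in> consistent_set K T (stream_data d t)"
    using adm_theta0[OF cp adm] by blast
  have th0: "\<theta>0 \<in> K" "\<theta>0 \<in> P t" for t using th0a th0b unfolding P_def by auto
  have PK: "P t \<subseteq> K" for t using P_sub_K[OF K] P_def by simp
  have Pne: "P t \<noteq> {}" for t using th0 by blast
  have Pcl: "closed (P t)" for t using P_closed P_def by simp
  have Pmono: "P t' \<subseteq> P t" if "t \<le> t'" for t t'
    unfolding P_def by (rule P_mono[OF stream_mono[OF that]])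
  define h where "h t = hausdorff_dist (P (Suc t)) (P t)" for t
  have h0: "0 \<le> h t" for t unfolding h_def using hd_nonneg[OF bK PK PK Pne Pne] .
  define Pinf where "Pinf = \<Inter>(range P)"
  have Pinf_ne: "Pinf \<noteq> {}" using th0 unfolding Pinf_def by blast
  have Pinf_sub: "Pinf \<subseteq> P t" for t unfolding Pinf_def by blast
  have hsmall: "\<exists>M. \<forall>t\<ge>M. h t \<le> e" if e: "0 < e" for e
  proof -
    define C where "C t = P t \<inter> {x. e \<le> infdist x Pinf}" for t
    have Ccl: "closed (C t)" for t
      unfolding C_def by (intro closed_Int Pcl closed_Collect_le continuous_intros)
    have "\<exists>t. C t = {}"
    proof (rule ccontr)
      assume "\<not> (\<exists>t. C t = {})"
      then have Cne: "C t \<noteq> {}" for t by blast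
      have Cmono: "C t' \<subseteq> C t" if "t \<le> t'" for t t' unfolding C_def using Pmono[OF that] by blast
      have "K \<inter> \<Inter>(range C) \<noteq> {}"
      proof (rule compact_imp_fip[OF K])
        show "closed T" if "T \<in> range C" for T using that Ccl by blast
        fix F' assume F': "finite F'" "F' \<subseteq> range C"
        then obtain I where I: "finite I" "F' = C ` I" by (meson finite_subset_image)
        define m where "m = Max (insert 0 I)"
        have "C m \<subseteq> C i" if "i \<in> I" for i
          using Cmono[of i m] Max_ge[of "insert 0 I" i] I(1) that unfolding m_def by auto
        then have "C m \<subseteq> \<Inter>F'" using I(2) by auto
        moreover have "C m \<subseteq> K" unfolding C_def using PK by blast
        ultimately show "K \<inter> \<Inter>F' \<noteq> {}" using Cne[of m] by blast
      qed
      then obtain x where x: "\<And>t. x \<in> C t" by blast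
      then have "x \<in> Pinf" unfolding C_def Pinf_def by blast
      then have "infdist x Pinf = 0" by simp
      with x[of 0] e show False unfolding C_def by simp
    qed
    then obtain M where M: "C M = {}" by blast
    have "h t \<le> e" if "t \<ge> M" for t
      unfolding h_def
    proof (rule hd_le[OF Pne Pne])
      fix a assume "a \<in> P (Suc t)"
      then have "a \<in> P t" using Pmono[of t "Suc t"] by auto
      then show "infdist a (P t) \<le> e" using e by simp
    next
      fix b assume b: "b \<in> P t"
      then have "b \<in> P M" using Pmono[OF that] by blast
      then have "infdist b Pinf < e" using M unfolding C_def by auto
      moreover have "infdist b (P (Suc t)) \<le> infdist b Pinf"
        by (rule infdist_mono[OF Pinf_sub Pinf_ne])
      ultimately show "infdist b (P (Suc t)) \<le> e" by simp
    qed
    then show ?thesis by blast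
  qed
  have htend: "h \<longlonglongrightarrow> 0"
  proof (rule LIMSEQ_I)
    fix r :: real assume "0 < r"
    then obtain M where "\<forall>t\<ge>M. h t \<le> r / 2" using hsmall[of "r/2"] by auto
    then show "\<exists>no. \<forall>n\<ge>no. norm (h n - 0) < r"
    proof (intro exI allI impI)
      fix n assume "\<forall>t\<ge>M. h t \<le> r / 2" "M \<le> n"
      then have "h n \<le> r / 2" by auto
      then show "norm (h n - 0) < r" using h0[of n] \<open>0 < r\<close> by simp
    qed
  qed
  have step: "dist (\<theta> (Suc t)) (\<theta> t) \<le> \<bar>\<gamma>\<bar> * h t" for t
  proof -
    have "{t<..Suc t} = {Suc t}" by auto
    then have "dist (\<theta> (Suc t)) (\<theta> t) \<le> \<gamma> * h t"
      using g[of t "Suc t"] N unfolding competitive_ineq_def \<theta>_def h_def P_def by simp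
    also have "\<dots> \<le> \<bar>\<gamma>\<bar> * h t" using h0[of t] by (intro mult_right_mono) auto
    finally show ?thesis .
  qed
  have "(\<lambda>t. \<bar>\<gamma>\<bar> * h t) \<longlonglongrightarrow> \<bar>\<gamma>\<bar> * 0" by (intro tendsto_mult tendsto_const htend)
  then have lim: "(\<lambda>t. \<bar>\<gamma>\<bar> * h t) \<longlonglongrightarrow> 0" by simp
  have ev: "eventually (\<lambda>t. norm (dist (SEL (stream_data d (Suc t))) (SEL (stream_data d t))) \<le> \<bar>\<gamma>\<bar> * h t) sequentially"
    using step unfolding \<theta>_def by simp
  show "(\<lambda>t. dist (SEL (stream_data d (Suc t))) (SEL (stream_data d t))) \<longlonglongrightarrow> 0"
    by (rule Lim_null_comparison[OF ev lim])
qed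


definition K1 :: "real set" where "K1 = {0, 1}"
definition f0 :: "(real, real) dynfun" where "f0 = (\<lambda>t x u. 0)"
definition T1 :: "real \<Rightarrow> (real, real) dynfun set" where "T1 \<theta> = {f0}"
definition F1 :: "(real, real) dynfun set" where "F1 = {f0}"
definition SEL1 :: "(real, real) datum set \<Rightarrow> real" where "SEL1 D = (if D = {} then 0 else 1)"

lemma K1_compact: "compact K1" unfolding K1_def by simp

lemma P1: "consistent_set K1 T1 D = (if consistent f0 D then K1 else {})"
proof -
  have "{\<theta> \<in> K1. \<exists>f\<in>T1 \<theta>. consistent f D} = (if consistent f0 D then K1 else {})"
    unfolding T1_def by auto
  moreover have "closed K1" using K1_compact by (rule compact_imp_closed)
  ultimately show ?thesis unfolding consistent_set_def by simp
qed

lemma cp1: "compact_parametrization K1 T1 F1"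
  unfolding compact_parametrization_def using K1_compact unfolding T1_def F1_def K1_def by auto

lemma sel1: "is_selection K1 T1 SEL1"
  unfolding is_selection_def P1 by (auto simp: SEL1_def K1_def)

lemma A1: "chase_A K1 T1 F1 SEL1"
  unfolding chase_A_def
proof (intro allI impI)
  fix d :: "nat \<Rightarrow> (real, real) datum"
  have "eventually (\<lambda>t. SEL1 (stream_data d t) = 1) sequentially"
    unfolding eventually_sequentially
  proof (intro exI allI impI)
    fix t :: nat assume "1 \<le> t"
    then have "d 1 \<in> stream_data d t" unfolding stream_data_def by auto
    then show "SEL1 (stream_data d t) = 1" unfolding SEL1_def by auto
  qed
  then have "(\<lambda>t. SEL1 (stream_data d t)) \<longlonglongrightarrow> 1" by (rule tendsto_eventually)
  then show "convergent (\<lambda>t. SEL1 (stream_data d t))" unfolding convergent_def by blast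
qed

lemma notD1: "\<not> chase_D K1 T1 F1 SEL1"
proof
  assume "chase_D K1 T1 F1 SEL1"
  then obtain \<gamma> N where N: "N \<ge> 1" and g: "\<And>d. admissible_stream F1 d \<Longrightarrow>
      (\<forall>t1 t2. t1 < t2 \<and> t2 - t1 \<le> N \<longrightarrow> competitive_ineq K1 T1 SEL1 \<gamma> d t1 t2)"
    unfolding chase_D_def by blast
  define d0 :: "nat \<Rightarrow> (real, real) datum" where "d0 = (\<lambda>_. (0, 0, 0, 0))"
  have cons: "consistent f0 D" if "D \<subseteq> range d0" for D
    using that unfolding consistent_def f0_def d0_def by auto
  have adm: "admissible_stream F1 d0"
    unfolding admissible_stream_def F1_def using cons unfolding stream_data_def by blast
  have ci: "competitive_ineq K1 T1 SEL1 \<gamma> d0 0 1" using g[OF adm] N by auto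
  have P: "consistent_set K1 T1 (stream_data d0 t) = K1" for t
    unfolding P1 using cons[of "stream_data d0 t"] unfolding stream_data_def by auto
  have s1: "stream_data d0 1 \<noteq> {}" "stream_data d0 0 = {}" unfolding stream_data_def by auto
  have "hausdorff_dist K1 K1 \<le> 0" by (rule hd_le) (auto simp: K1_def)
  moreover have "0 \<le> hausdorff_dist K1 K1"
    by (rule hd_nonneg[OF compact_imp_bounded[OF K1_compact]]) (auto simp: K1_def)
  moreover have "{0<..Suc 0} = {1::nat}" by auto
  ultimately show False using ci s1 unfolding competitive_ineq_def P SEL1_def
    by (auto simp: K1_def)
qed


definition mm :: "nat \<Rightarrow> nat" where "mm j = 2 ^ (j + 2)"
definition BB :: "nat \<Rightarrow> nat" where "BB j = 2 ^ (mm j)"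
definition base :: "nat \<Rightarrow> real" where "base j = 1 / 2 ^ j"
definition len :: "nat \<Rightarrow> real" where "len j = 1 / 2 ^ (j + 1)"
definition kk :: "nat \<Rightarrow> nat" where "kk a = (LEAST k. a < 2 ^ k)"
definition ee :: "nat \<Rightarrow> real" where "ee a = (2 * real a + 1 - 2 ^ kk a) / 2 ^ kk a"
definition pt :: "nat \<Rightarrow> nat \<Rightarrow> real" where "pt j a = base j + len j * ee a"
definition cap :: "nat \<Rightarrow> nat \<Rightarrow> nat" where "cap j a = 2 * BB j - 1 - a"
definition wt :: "nat \<Rightarrow> nat \<Rightarrow> real" where "wt j a = len j / 2 ^ kk a"

lemma kk_lt: "a < 2 ^ kk a"
  unfolding kk_def by (rule LeastI[of _ a]) (rule less_exp)

lemma kk_least: "k < kk a \<Longrightarrow> 2 ^ k \<le> a"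
  unfolding kk_def using not_less_Least by (metis not_less)

lemma kk_0: "kk 0 = 0"
  unfolding kk_def by (rule Least_equality) auto

lemma kk_ge1: "1 \<le> a \<Longrightarrow> 1 \<le> kk a"
  using kk_lt[of a] by (cases "kk a") auto

lemma kk_low: "1 \<le> a \<Longrightarrow> 2 ^ (kk a - 1) \<le> a"
  using kk_least[of "kk a - 1" a] kk_ge1[of a] by simp

lemma kk_eq: "2 ^ m \<le> a \<Longrightarrow> a < 2 ^ Suc m \<Longrightarrow> kk a = Suc m"
  unfolding kk_def
proof (rule Least_equality)
  fix k assume "2 ^ m \<le> a" "a < 2 ^ k"
  then have "(2::nat) ^ m < 2 ^ k" by (rule le_less_trans)
  then have "m < k" by (rule power_less_imp_less_exp[rotated]) simp
  then show "Suc m \<le> k" by (simp add: Suc_le_eq)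
qed

lemma kk_mono: "b \<le> a \<Longrightarrow> kk b \<le> kk a"
  unfolding kk_def[of b] using kk_lt[of a] by (intro Least_le) simp

lemma two_pow_kk: "1 \<le> a \<Longrightarrow> (2::real) ^ kk a = 2 * 2 ^ (kk a - 1)"
  using kk_ge1[of a] by (metis Suc_diff_1 less_le_trans power_Suc zero_less_one)

lemma ee_0: "ee 0 = 0"
  unfolding ee_def kk_0 by simp

lemma ee_lo:
  assumes "1 \<le> a" shows "1 / 2 ^ kk a \<le> ee a"
proof -
  have "real (2 ^ (kk a - 1)) \<le> real a" using kk_low[OF assms] by linarith
  then have "(2::real) ^ (kk a - 1) \<le> real a" by simp
  then have "1 \<le> 2 * real a + 1 - 2 ^ kk a" using two_pow_kk[OF assms] by simp
  then show ?thesis unfolding ee_def by (simp add: divide_right_mono)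
qed

lemma ee_hi: "ee a \<le> 1 - 1 / 2 ^ kk a"
proof -
  have "a + 1 \<le> 2 ^ kk a" using kk_lt[of a] by simp
  then have "real (a + 1) \<le> real (2 ^ kk a)" by (simp only: of_nat_le_iff)
  then have "real a + 1 \<le> 2 ^ kk a" by simp
  then have "2 * real a + 1 - 2 ^ kk a \<le> 2 ^ kk a - 1" by simp
  then have "(2 * real a + 1 - 2 ^ kk a) / 2 ^ kk a \<le> (2 ^ kk a - 1) / 2 ^ kk a"
    by (simp add: divide_right_mono)
  also have "\<dots> = 1 - 1 / 2 ^ kk a" by (simp add: field_simps)
  finally show ?thesis unfolding ee_def .
qed

lemma ee_nonneg: "0 \<le> ee a"
  using ee_lo[of a] ee_0 by (cases "a = 0") (auto intro: order_trans[OF _ ee_lo])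

lemma ee_lt1: "ee a < 1"
  using ee_hi[of a] by (smt (verit) divide_pos_pos zero_less_power)

lemma ee_sep:
  assumes "b < a" shows "1 / 2 ^ kk a \<le> \<bar>ee a - ee b\<bar>"
proof -
  define k where "k = kk a"
  define k' where "k' = kk b"
  have a1: "1 \<le> a" using assms by simp
  have k1: "1 \<le> k" using kk_ge1[OF a1] k_def by simp
  have kk': "k' \<le> k" unfolding k_def k'_def using assms by (intro kk_mono) simp
  define N :: int where "N = 2 * int a + 1 - 2 ^ k"
  define N' :: int where "N' = (2 * int b + 1 - 2 ^ k') * 2 ^ (k - k')"
  have eea: "ee a = real_of_int N / 2 ^ k" unfolding ee_def N_def k_def by simp
  have "(2::real) ^ k = 2 ^ k' * 2 ^ (k - k')" using kk' by (simp add: power_add[symmetric])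
  then have eeb: "ee b = real_of_int N' / 2 ^ k" unfolding ee_def N'_def k'_def by simp
  have "N \<noteq> N'"
  proof (cases "k' = k")
    case True
    then show ?thesis unfolding N_def N'_def using assms by simp
  next
    case False
    then have "k - k' \<ge> 1" using kk' by simp
    then have "even ((2::int) ^ (k - k'))" by simp
    then have "even N'" unfolding N'_def by simp
    moreover have "odd N" unfolding N_def using k1 by simp
    ultimately show ?thesis by auto
  qed
  then have "1 \<le> \<bar>N - N'\<bar>" by simp
  then have "1 \<le> \<bar>real_of_int N - real_of_int N'\<bar>" by linarith
  then have "1 / 2 ^ k \<le> \<bar>real_of_int N - real_of_int N'\<bar> / 2 ^ k" by (simp add: divide_right_mono)
  also have "\<dots> = \<bar>ee a - ee b\<bar>" unfolding eea eeb by (simp add: diff_divide_distrib[symmetric])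
  finally show ?thesis unfolding k_def .
qed

lemma BB_Suc: "BB (Suc j) = BB j * BB j"
  unfolding BB_def mm_def by (simp add: power_add[symmetric] mult_2)

lemma BB_ge2: "2 \<le> BB j"
proof -
  have "1 \<le> mm j" unfolding mm_def by simp
  then have "(2::nat) ^ 1 \<le> 2 ^ mm j" by (intro power_increasing) auto
  then show ?thesis unfolding BB_def by simp
qed

lemma BB_mono: "j \<le> j' \<Longrightarrow> BB j \<le> BB j'"
  unfolding BB_def mm_def by (intro power_increasing) auto

lemma BB_gt: "j < BB j"
proof -
  have "j < 2 ^ j" by (rule less_exp)
  also have "(2::nat) ^ j \<le> 2 ^ (j + 2)" by (intro power_increasing) auto
  also have "(2::nat) ^ (j + 2) < 2 ^ (2 ^ (j + 2))" by (rule less_exp)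
  finally show ?thesis unfolding BB_def mm_def .
qed

lemma BB_Suc_ge: "2 * BB j \<le> BB (Suc j)"
  unfolding BB_Suc using BB_ge2[of j] by simp

lemma BB_strict: "BB j < BB (Suc j)"
  using BB_Suc_ge[of j] BB_ge2[of j] by simp

lemma cap_bounds:
  assumes "1 \<le> a" "a < BB j"
  shows "BB j \<le> cap j a" "cap j a + 2 \<le> 2 * BB j"
  using assms unfolding cap_def by auto

lemma cap_inj:
  assumes "1 \<le> a" "a < BB j" "1 \<le> a'" "a' < BB j'" "cap j a = cap j' a'"
  shows "j = j' \<and> a = a'"
proof -
  have "j = j'"
  proof (rule ccontr)
    assume "j \<noteq> j'"
    then consider "j < j'" | "j' < j" by linarith
    then show False
    proof cases
      case 1
      then have "BB (Suc j) \<le> BB j'" by (intro BB_mono) simp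
      then show False using cap_bounds[OF assms(1,2)] cap_bounds[OF assms(3,4)] BB_Suc_ge[of j] assms(5) by linarith
    next
      case 2
      then have "BB (Suc j') \<le> BB j" by (intro BB_mono) simp
      then show False using cap_bounds[OF assms(1,2)] cap_bounds[OF assms(3,4)] BB_Suc_ge[of j'] assms(5) by linarith
    qed
  qed
  then show ?thesis using assms unfolding cap_def by auto
qed

lemma harm_kk: "(\<Sum>a\<in>{1..<2 ^ m}. 1 / (2::real) ^ kk a) = real m / 2"
proof (induction m)
  case 0 then show ?case by simp
next
  case (Suc m)
  have "(\<Sum>a\<in>{1..<2 ^ Suc m}. 1 / (2::real) ^ kk a) =
        (\<Sum>a\<in>{1..<2 ^ m}. 1 / (2::real) ^ kk a) + (\<Sum>a\<in>{2 ^ m..<2 ^ Suc m}. 1 / (2::real) ^ kk a)"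
    by (rule sum.atLeastLessThan_concat[symmetric]) auto
  also have "(\<Sum>a\<in>{2 ^ m..<2 ^ Suc m}. 1 / (2::real) ^ kk a) = (\<Sum>a\<in>{(2::nat) ^ m..<2 ^ Suc m}. 1 / (2::real) ^ Suc m)"
    by (rule sum.cong) (auto simp: kk_eq)
  also have "\<dots> = 1 / 2" by (simp add: field_simps)
  finally show ?case using Suc.IH by simp
qed


lemma len_pos: "0 < len j" unfolding len_def by simp
lemma base_len: "base j = 2 * len j" unfolding base_def len_def by simp
lemma len_le: "len j \<le> 1 / 2"
proof -
  have "(2::real) ^ 1 \<le> 2 ^ (j + 1)" by (intro power_increasing) auto
  then show ?thesis unfolding len_def by (simp add: field_simps)
qed
lemma wt_eq: "wt j a = len j * (1 / 2 ^ kk a)" unfolding wt_def by simp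
lemma wt_pos: "0 < wt j a" unfolding wt_def using len_pos by simp
lemma wt_le: "wt j a \<le> len j"
  unfolding wt_def using len_pos[of j] by (simp add: field_simps)

lemma pt_lo: "base j \<le> pt j a"
  unfolding pt_def using len_pos[of j] ee_nonneg[of a] by simp
lemma pt_hi: "pt j a < base j + len j"
  unfolding pt_def using len_pos[of j] ee_lt1[of a] by simp
lemma pt_valid_lo:
  assumes a: "1 \<le> a" shows "base j + wt j a \<le> pt j a"
proof -
  have "len j * (1 / 2 ^ kk a) \<le> len j * ee a"
    using len_pos[of j] ee_lo[OF a] by (intro mult_left_mono) auto
  then show ?thesis unfolding pt_def wt_eq by simp
qed
lemma pt_valid_hi: "pt j a \<le> base j + len j - wt j a"
proof -
  have "len j * ee a \<le> len j * (1 - 1 / 2 ^ kk a)"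
    using len_pos[of j] ee_hi[of a] by (intro mult_left_mono) auto
  then show ?thesis unfolding pt_def wt_eq by (simp add: algebra_simps)
qed

lemma base_gap: "j' < j \<Longrightarrow> 2 * base j \<le> base j'"
proof -
  assume "j' < j"
  then have "(2::real) ^ Suc j' \<le> 2 ^ j" by (intro power_increasing) auto
  then have "2 * (2::real) ^ j' \<le> 2 ^ j" by simp
  then show ?thesis unfolding base_def by (simp add: field_simps)
qed

lemma pt_nonneg: "0 \<le> pt j a"
  using pt_lo[of j a] unfolding base_def by (smt (verit) divide_pos_pos zero_less_power)

lemma pt_le2: "pt j a \<le> 2"
proof -
  have "base j \<le> 1" unfolding base_def by simp
  then show ?thesis using pt_hi[of j a] len_le[of j] by simp
qed

lemma pt_sep:
  assumes a: "1 \<le> a" and dj: "j' \<noteq> j \<or> a' < a"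
  shows "wt j a \<le> \<bar>pt j' a' - pt j a\<bar>"
proof -
  consider "j < j'" | "j' < j" | "j' = j" "a' < a" using dj by linarith
  then show ?thesis
  proof cases
    case 1
    then have "2 * base j' \<le> base j" by (rule base_gap)
    then have "pt j' a' < base j" using pt_hi[of j' a'] base_len[of j'] len_pos[of j'] by simp
    then show ?thesis using pt_valid_lo[OF a, of j] by simp
  next
    case 2
    then have "2 * base j \<le> base j'" by (rule base_gap)
    then have "pt j a + wt j a \<le> pt j' a'"
      using pt_lo[of j' a'] pt_valid_hi[of j a] base_len[of j] len_pos[of j] by linarith
    then show ?thesis by simp
  next
    case 3
    have "len j * (1 / 2 ^ kk a) \<le> len j * \<bar>ee a - ee a'\<bar>"
      using ee_sep[OF 3(2)] len_pos[of j] by (intro mult_left_mono) auto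
    also have "\<dots> = \<bar>pt j' a' - pt j a\<bar>" unfolding pt_def 3(1) using len_pos[of j]
      by (simp add: abs_mult right_diff_distrib[symmetric] abs_minus_commute)
    finally show ?thesis unfolding wt_eq .
  qed
qed

lemma pt_inj:
  assumes "1 \<le> a" "1 \<le> a'" "pt j a = pt j' a'"
  shows "j = j' \<and> a = a'"
proof (rule ccontr)
  assume ne: "\<not> (j = j' \<and> a = a')"
  show False
  proof (cases "j' \<noteq> j \<or> a' < a")
    case True
    then show False using pt_sep[OF assms(1) True] wt_pos[of j a] assms(3) by simp
  next
    case False
    then have "j = j'" "a < a'" using ne by auto
    then have "wt j a' \<le> \<bar>pt j a - pt j a'\<bar>" using pt_sep[where a=a' and a'=a and j=j and j'=j] assms(2) by simp
    then show False using wt_pos[of j a'] assms(3) \<open>j = j'\<close> by simp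
  qed
qed

definition PS :: "nat \<Rightarrow> (nat \<times> nat) set" where
  "PS n = {(j, a). 1 \<le> a \<and> a < BB j \<and> cap j a < n}"
definition EE :: "nat \<Rightarrow> (nat \<times> nat) set" where
  "EE n = {(j, a). 1 \<le> a \<and> a < BB j \<and> cap j a = n}"
definition Phi :: "nat \<Rightarrow> real" where
  "Phi n = (\<Sum>(j, a)\<in>PS n. wt j a)"

lemma PS_sub: "PS n \<subseteq> {..<n} \<times> {..<n}"
proof
  fix p assume "p \<in> PS n"
  then obtain j a where p: "p = (j, a)" "1 \<le> a" "a < BB j" "cap j a < n" unfolding PS_def by blast
  have "j < n" using BB_gt[of j] cap_bounds[OF p(2,3)] p(4) by linarith
  moreover have "a < n" using cap_bounds[OF p(2,3)] p(3,4) by linarith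
  ultimately show "p \<in> {..<n} \<times> {..<n}" using p by simp
qed

lemma PS_finite: "finite (PS n)"
  by (rule finite_subset[OF PS_sub]) simp

lemma PS_Suc: "PS (Suc n) = PS n \<union> EE n"
  unfolding PS_def EE_def by auto

lemma EE_finite: "finite (EE n)"
  by (rule finite_subset[OF _ PS_finite[of "Suc n"]]) (auto simp: PS_Suc)

lemma Phi_Suc: "Phi (Suc n) = Phi n + (\<Sum>(j, a)\<in>EE n. wt j a)"
proof -
  have "PS n \<inter> EE n = {}" unfolding PS_def EE_def by auto
  then show ?thesis unfolding Phi_def PS_Suc by (simp add: sum.union_disjoint PS_finite EE_finite)
qed

lemma EE_single:
  assumes "(j, a) \<in> EE n" shows "EE n = {(j, a)}"
proof -
  have "(j', a') = (j, a)" if "(j', a') \<in> EE n" for j' a'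
    using that assms cap_inj[of a j a' j'] unfolding EE_def by auto
  show ?thesis
  proof (intro set_eqI iffI)
    fix p assume "p \<in> EE n"
    then show "p \<in> {(j, a)}" using \<open>\<And>j' a'. (j', a') \<in> EE n \<Longrightarrow> (j', a') = (j, a)\<close> by (cases p) simp
  next
    fix p assume "p \<in> {(j, a)}"
    then show "p \<in> EE n" using assms by simp
  qed
qed

lemma Phi_Suc_none: "EE n = {} \<Longrightarrow> Phi (Suc n) = Phi n"
  by (simp add: Phi_Suc)

lemma Phi_Suc_one: assumes "(j, a) \<in> EE n" shows "Phi (Suc n) = Phi n + wt j a"
  using EE_single[OF assms] by (simp add: Phi_Suc)

lemma PS_block: "PS (2 * BB J - 1) = Sigma {..J} (\<lambda>j. {1..<BB j})"
proof (intro set_eqI iffI)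
  fix p assume "p \<in> PS (2 * BB J - 1)"
  then obtain j a where p: "p = (j, a)" "1 \<le> a" "a < BB j" "cap j a < 2 * BB J - 1" unfolding PS_def by blast
  have "j \<le> J"
  proof (rule ccontr)
    assume "\<not> j \<le> J"
    then have "BB (Suc J) \<le> BB j" by (intro BB_mono) simp
    then show False using BB_Suc_ge[of J] cap_bounds[OF p(2,3)] p(4) by linarith
  qed
  then show "p \<in> Sigma {..J} (\<lambda>j. {1..<BB j})" using p by simp
next
  fix p assume "p \<in> Sigma {..J} (\<lambda>j. {1..<BB j})"
  moreover obtain j a where pp: "p = (j, a)" by (cases p)
  ultimately have p: "p = (j, a)" "j \<le> J" "1 \<le> a" "a < BB j" by auto
  have "BB j \<le> BB J" using p(2) by (rule BB_mono)
  then have "cap j a < 2 * BB J - 1" using cap_bounds[OF p(3,4)] BB_ge2[of j] by linarith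
  then show "p \<in> PS (2 * BB J - 1)" using p unfolding PS_def by simp
qed

lemma block_sum: "(\<Sum>a\<in>{1..<BB j}. wt j a) = 1"
proof -
  have "(\<Sum>a\<in>{1..<BB j}. wt j a) = len j * (\<Sum>a\<in>{1..<2 ^ mm j}. 1 / (2::real) ^ kk a)"
    unfolding wt_eq BB_def by (simp add: sum_distrib_left)
  also have "\<dots> = len j * (real (mm j) / 2)" using harm_kk[of "mm j"] by simp
  also have "\<dots> = 1" unfolding len_def mm_def by (simp add: field_simps)
  finally show ?thesis .
qed

lemma Phi_block: "Phi (2 * BB J - 1) = real (Suc J)"
proof -
  have "Phi (2 * BB J - 1) = (\<Sum>(j, a)\<in>Sigma {..J} (\<lambda>j. {1..<BB j}). wt j a)"
    unfolding Phi_def PS_block ..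
  also have "\<dots> = (\<Sum>j\<le>J. \<Sum>a\<in>{1..<BB j}. wt j a)"
    by (rule sum.Sigma[symmetric]) auto
  also have "\<dots> = (\<Sum>j\<le>J. (1::real))" by (intro sum.cong refl block_sum)
  also have "\<dots> = real (Suc J)" by simp
  finally show ?thesis .
qed

definition sig :: "nat \<Rightarrow> real" where "sig n = 10 + (1 - cos (pi * Phi n)) / 2"

lemma sig_range: "10 \<le> sig n" "sig n \<le> 11"
  unfolding sig_def using cos_ge_minus_one[of "pi * Phi n"] cos_le_one[of "pi * Phi n"] by auto

lemma cos_lip: fixes x y :: real shows "\<bar>cos x - cos y\<bar> \<le> \<bar>x - y\<bar>"
proof -
  have "\<bar>cos x - cos y\<bar> = 2 * \<bar>sin ((x + y) / 2)\<bar> * \<bar>sin ((y - x) / 2)\<bar>"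
    by (simp add: cos_diff_cos abs_mult)
  also have "\<dots> \<le> 2 * 1 * \<bar>(y - x) / 2\<bar>"
    by (intro mult_mono abs_sin_x_le_abs_x) auto
  also have "\<dots> = \<bar>x - y\<bar>" by simp
  finally show ?thesis .
qed

lemma sig_lip: "\<bar>sig n' - sig n\<bar> \<le> 2 * \<bar>Phi n' - Phi n\<bar>"
proof -
  have "sig n' - sig n = (cos (pi * Phi n) - cos (pi * Phi n')) / 2"
    unfolding sig_def by (simp add: field_simps)
  then have "\<bar>sig n' - sig n\<bar> = \<bar>cos (pi * Phi n) - cos (pi * Phi n')\<bar> / 2"
    by (simp only: abs_divide)
  also have "\<dots> \<le> \<bar>pi * Phi n - pi * Phi n'\<bar> / 2"
    by (intro divide_right_mono cos_lip) auto
  also have "\<dots> = pi * \<bar>Phi n' - Phi n\<bar> / 2"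
    by (simp add: right_diff_distrib[symmetric] abs_mult abs_minus_commute)
  also have "\<dots> \<le> 4 * \<bar>Phi n' - Phi n\<bar> / 2"
    using pi_less_4 by (intro divide_right_mono mult_right_mono) auto
  finally show ?thesis by simp
qed

lemma sig_block: "sig (2 * BB J - 1) = 10 + (1 - (-1) ^ Suc J) / 2"
  by (simp only: sig_def Phi_block cos_npi2)


definition S2 :: "real set" where "S2 = {10..11} \<union> {pt j a | j a. a < BB j}"
definition K2 :: "real set" where "K2 = closure S2"
definition gA :: "nat set \<Rightarrow> (real, real) dynfun" where "gA A = (\<lambda>t x u. if t \<in> A then 0 else 1)"
definition T2 :: "real \<Rightarrow> (real, real) dynfun set" where
  "T2 \<theta> = {gA A | A. \<forall>j a. 1 \<le> a \<and> a < BB j \<and> \<theta> = pt j a \<longrightarrow> finite A \<and> card A \<le> cap j a}"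
definition F2 :: "(real, real) dynfun set" where "F2 = (\<Union>\<theta>\<in>K2. T2 \<theta>)"
definition ZZ :: "(real, real) datum set \<Rightarrow> nat set" where "ZZ D = {t. \<exists>x u. (t, 0, x, u) \<in> D}"
definition SEL2 :: "(real, real) datum set \<Rightarrow> real" where
  "SEL2 D = (if sig (card (ZZ D)) \<in> consistent_set K2 T2 D then sig (card (ZZ D))
             else (SOME \<theta>. \<theta> \<in> consistent_set K2 T2 D))"
definition FF :: "nat \<Rightarrow> real set" where "FF n = (\<lambda>(j, a). pt j a) ` PS n"

lemma S2_sub: "S2 \<subseteq> {0..11}"
proof -
  have "pt j a \<in> {0..11}" for j a using pt_nonneg[of j a] pt_le2[of j a] by simp
  then show ?thesis unfolding S2_def by auto
qed

lemma K2_compact: "compact K2"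
proof -
  have "bounded S2" using S2_sub by (rule bounded_subset[OF compact_imp_bounded[OF compact_Icc]])
  then show ?thesis unfolding K2_def by simp
qed

lemma K2_bounded: "bounded K2" using K2_compact by (rule compact_imp_bounded)

lemma S2_K2: "S2 \<subseteq> K2" unfolding K2_def by (rule closure_subset)

lemma cp2: "compact_parametrization K2 T2 F2"
  unfolding compact_parametrization_def F2_def using K2_compact by auto

lemma sel2: "is_selection K2 T2 SEL2"
  unfolding is_selection_def SEL2_def by (auto intro: someI_ex)

lemma F2_gA: "f \<in> F2 \<Longrightarrow> \<exists>A. f = gA A"
  unfolding F2_def T2_def by auto

lemma gA_T2_far: assumes "\<theta> \<in> {10..11}" shows "gA A \<in> T2 \<theta>"
proof -
  have "\<theta> \<noteq> pt j a" for j a using pt_le2[of j a] assms by auto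
  then show ?thesis unfolding T2_def by blast
qed

lemma ZZ_finite: "finite D \<Longrightarrow> finite (ZZ D)"
proof -
  assume "finite D"
  moreover have "ZZ D \<subseteq> fst ` D" unfolding ZZ_def by force
  ultimately show ?thesis by (meson finite_imageI finite_subset)
qed

lemma Z_sub: "consistent (gA A) D \<Longrightarrow> ZZ D \<subseteq> A"
  unfolding consistent_def ZZ_def gA_def by (force split: if_splits)

lemma Z_cons:
  assumes "consistent (gA A0) D" shows "consistent (gA (ZZ D)) D"
  unfolding consistent_def
proof (clarify)
  fix t xp x u assume tx: "(t, xp, x, u) \<in> D"
  then have xp: "xp = (if t \<in> A0 then 0 else 1)" using assms unfolding consistent_def gA_def by fastforce
  show "xp = gA (ZZ D) t x u"
  proof (cases "t \<in> A0")
    case True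
    then have "t \<in> ZZ D" using tx xp unfolding ZZ_def by auto
    then show ?thesis using xp True unfolding gA_def by simp
  next
    case False
    have "t \<notin> ZZ D"
    proof
      assume "t \<in> ZZ D"
      then obtain x' u' where "(t, 0, x', u') \<in> D" unfolding ZZ_def by blast
      then have "(0::real) = (if t \<in> A0 then 0 else 1)" using assms unfolding consistent_def gA_def by fastforce
      then show False using False by simp
    qed
    then show ?thesis using xp False unfolding gA_def by simp
  qed
qed

lemma far_in_P:
  assumes "consistent (gA A0) D" "s \<in> {10..11}"
  shows "s \<in> consistent_set K2 T2 D"
proof -
  have "s \<in> K2" using assms(2) S2_K2 unfolding S2_def by blast
  moreover have "gA A0 \<in> T2 s" by (rule gA_T2_far[OF assms(2)])
  ultimately show ?thesis unfolding consistent_set_def using assms(1)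
    by (auto intro: closure_subset[THEN subsetD])
qed

lemma SEL2_eq:
  assumes "consistent (gA A0) D" shows "SEL2 D = sig (card (ZZ D))"
  using far_in_P[OF assms, of "sig (card (ZZ D))"] sig_range unfolding SEL2_def by auto

lemma pt_in_P:
  assumes a: "1 \<le> a" "a < BB j" and D: "finite D" "consistent (gA A0) D" and c: "card (ZZ D) \<le> cap j a"
  shows "pt j a \<in> consistent_set K2 T2 D"
proof -
  have "pt j a \<in> K2" using S2_K2 a unfolding S2_def by blast
  moreover have "gA (ZZ D) \<in> T2 (pt j a)"
    unfolding T2_def
  proof (intro CollectI exI conjI allI impI)
    fix j' a' assume h: "1 \<le> a' \<and> a' < BB j' \<and> pt j a = pt j' a'"
    then have "j = j' \<and> a = a'" using pt_inj[OF a(1)] by blast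
    then show "finite (ZZ D)" "card (ZZ D) \<le> cap j' a'" using ZZ_finite[OF D(1)] c by auto
  qed simp
  moreover have "consistent (gA (ZZ D)) D" by (rule Z_cons[OF D(2)])
  ultimately show ?thesis unfolding consistent_set_def by (auto intro: closure_subset[THEN subsetD])
qed

lemma FF_finite: "finite (FF n)" unfolding FF_def using PS_finite by simp

lemma P_sub:
  assumes D: "finite D"
  shows "consistent_set K2 T2 D \<subseteq> closure (S2 - FF (card (ZZ D)))"
proof -
  define n where "n = card (ZZ D)"
  have "{\<theta> \<in> K2. \<exists>f\<in>T2 \<theta>. consistent f D} \<subseteq> K2 - FF n"
  proof clarify
    fix \<theta> f assume h: "\<theta> \<in> K2" "f \<in> T2 \<theta>" "consistent f D" "\<theta> \<in> FF n"
    from h(4) obtain j a where ja: "(j, a) \<in> PS n" "\<theta> = pt j a" unfolding FF_def by auto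
    from h(2) obtain A where A: "f = gA A" "\<forall>j a. 1 \<le> a \<and> a < BB j \<and> \<theta> = pt j a \<longrightarrow> finite A \<and> card A \<le> cap j a"
      unfolding T2_def by blast
    have ja2: "1 \<le> a" "a < BB j" "cap j a < n" using ja(1) unfolding PS_def by auto
    then have fA: "finite A" "card A \<le> cap j a" using A(2) ja(2) by auto
    have "ZZ D \<subseteq> A" using Z_sub h(3) A(1) by simp
    then have "n \<le> card A" unfolding n_def using fA(1) by (rule card_mono[rotated])
    then show False using fA ja2 by simp
  qed
  also have "K2 - FF n \<subseteq> closure (S2 - FF n)"
  proof -
    have "S2 \<subseteq> (S2 - FF n) \<union> FF n" by blast
    then have "closure S2 \<subseteq> closure (S2 - FF n) \<union> closure (FF n)"
      using closure_mono closure_Un by metis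
    also have "closure (FF n) = FF n" using FF_finite finite_imp_closed closure_closed by blast
    finally show ?thesis unfolding K2_def by blast
  qed
  finally have "consistent_set K2 T2 D \<subseteq> closure (closure (S2 - FF n))"
    unfolding consistent_set_def by (rule closure_mono)
  then show ?thesis unfolding n_def by simp
qed

lemma far_from:
  assumes a: "1 \<le> a" "a < BB j" and x: "x \<in> S2 - FF (Suc (cap j a))"
  shows "wt j a \<le> dist (pt j a) x"
proof -
  have x1: "x \<in> S2" and x2: "x \<notin> FF (Suc (cap j a))" using x by auto
  show ?thesis
  proof (cases "x \<in> {10..11}")
    case True
    then show ?thesis using pt_le2[of j a] wt_le[of j a] len_le[of j] by (simp add: dist_real_def)
  next
    case False
    then obtain j' a' where ja: "x = pt j' a'" "a' < BB j'" using x1 unfolding S2_def by blast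
    have "(j', a') \<notin> PS (Suc (cap j a))" using x2 ja(1) unfolding FF_def by force
    then have "a' = 0 \<or> cap j' a' > cap j a" using ja(2) unfolding PS_def by auto
    then have "j' \<noteq> j \<or> a' < a"
      using a unfolding cap_def by auto
    then have "wt j a \<le> \<bar>pt j' a' - pt j a\<bar>" by (rule pt_sep[OF a(1)])
    then show ?thesis using ja(1) by (simp add: dist_real_def abs_minus_commute)
  qed
qed

lemma closure_far:
  assumes a: "1 \<le> a" "a < BB j" and x: "x \<in> closure (S2 - FF (Suc (cap j a)))"
  shows "wt j a \<le> dist (pt j a) x"
proof -
  have "S2 - FF (Suc (cap j a)) \<subseteq> - ball (pt j a) (wt j a)"
  proof
    fix y assume "y \<in> S2 - FF (Suc (cap j a))"
    then have "wt j a \<le> dist (pt j a) y" by (rule far_from[OF a])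
    then show "y \<in> - ball (pt j a) (wt j a)" by (simp add: ball_def not_less)
  qed
  moreover have "closed (- ball (pt j a) (wt j a))" by auto
  ultimately have "closure (S2 - FF (Suc (cap j a))) \<subseteq> - ball (pt j a) (wt j a)"
    by (rule closure_minimal)
  then show ?thesis using x by (auto simp: ball_def)
qed

lemma infdist_lb:
  assumes "A \<noteq> {}" "\<And>y. y \<in> A \<Longrightarrow> w \<le> dist x y"
  shows "w \<le> infdist x A"
  unfolding infdist_def using assms by (auto intro: cINF_greatest)

lemma ZZ_insert: "ZZ (insert (t, xp, x, u) D) = (if xp = 0 then insert t (ZZ D) else ZZ D)"
  unfolding ZZ_def by auto

lemma stream_Suc: "stream_data d (Suc t) = insert (d (Suc t)) (stream_data d t)"
  unfolding stream_data_def by (auto simp: atLeastAtMostSuc_conv)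

lemma card_step: "card (ZZ (stream_data d (Suc t))) = card (ZZ (stream_data d t)) \<or>
                  card (ZZ (stream_data d (Suc t))) = Suc (card (ZZ (stream_data d t)))"
proof -
  obtain t' xp x u where dd: "d (Suc t) = (t', xp, x, u)" by (cases "d (Suc t)") auto
  have fin: "finite (ZZ (stream_data d t))" by (rule ZZ_finite[OF stream_finite])
  show ?thesis unfolding stream_Suc dd ZZ_insert using fin by (auto simp: card_insert_if)
qed


lemma D2: "chase_D K2 T2 F2 SEL2"
  unfolding chase_D_def
proof (intro exI[of _ "2::real"] exI[of _ "1::nat"] conjI allI impI)
  show "1 \<le> (1::nat)" by simp
  fix d and t1 t2 :: nat assume adm: "admissible_stream F2 d" and tt: "t1 < t2 \<and> t2 - t1 \<le> 1"
  then have t2: "t2 = Suc t1" by auto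
  from adm obtain f where f: "f \<in> F2" "\<forall>t. consistent f (stream_data d t)" unfolding admissible_stream_def by blast
  obtain A0 where A0: "f = gA A0" using F2_gA[OF f(1)] by blast
  define D where "D = stream_data d t1"
  define D' where "D' = stream_data d (Suc t1)"
  have cD: "consistent (gA A0) D" "consistent (gA A0) D'" using f(2) A0 unfolding D_def D'_def by auto
  have fD: "finite D" "finite D'" using stream_finite unfolding D_def D'_def by auto
  define n where "n = card (ZZ D)"
  define P where "P = consistent_set K2 T2 D"
  define P' where "P' = consistent_set K2 T2 D'"
  have PK: "P \<subseteq> K2" "P' \<subseteq> K2" using P_sub_K[OF K2_compact] unfolding P_def P'_def by auto
  have Pne: "P \<noteq> {}" "P' \<noteq> {}" using far_in_P[OF cD(1), of 10] far_in_P[OF cD(2), of 10] unfolding P_def P'_def by auto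
  have h0: "0 \<le> hausdorff_dist P' P" by (rule hd_nonneg[OF K2_bounded PK(2) PK(1) Pne(2) Pne(1)])
  have sel: "SEL2 D = sig n" "SEL2 D' = sig (card (ZZ D'))" using SEL2_eq cD unfolding n_def by auto
  have main: "dist (sig (card (ZZ D'))) (sig n) \<le> 2 * hausdorff_dist P' P"
  proof -
    from card_step[of d t1] consider "card (ZZ D') = n" | "card (ZZ D') = Suc n"
      unfolding D_def D'_def n_def by blast
    then show ?thesis
    proof cases
      case 1 then show ?thesis using h0 by simp
    next
      case 2
      show ?thesis
      proof (cases "EE n = {}")
        case True
        then show ?thesis using Phi_Suc_none[OF True] h0 2 sig_lip[of "Suc n" n] by (simp add: dist_real_def)
      next
        case False
        then obtain j a where ja: "(j, a) \<in> EE n" by auto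
        then have ja2: "1 \<le> a" "a < BB j" "cap j a = n" unfolding EE_def by auto
        have pP: "pt j a \<in> P" unfolding P_def
          by (rule pt_in_P[OF ja2(1,2) fD(1) cD(1)]) (simp add: n_def ja2(3))
        have sub: "P' \<subseteq> closure (S2 - FF (Suc (cap j a)))"
          using P_sub[OF fD(2)] 2 ja2(3) unfolding P'_def by simp
        have "wt j a \<le> infdist (pt j a) P'"
        proof (rule infdist_lb[OF Pne(2)])
          fix y assume "y \<in> P'"
          then show "wt j a \<le> dist (pt j a) y" using sub closure_far[OF ja2(1,2)] by blast
        qed
        also have "\<dots> \<le> hausdorff_dist P' P" by (rule hd_ge2[OF K2_bounded PK(2) PK(1) Pne(2) pP])
        finally have w: "wt j a \<le> hausdorff_dist P' P" .
        have "dist (sig (Suc n)) (sig n) \<le> 2 * \<bar>Phi (Suc n) - Phi n\<bar>" using sig_lip by (simp add: dist_real_def)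
        also have "\<dots> = 2 * wt j a" using Phi_Suc_one[OF ja] wt_pos[of j a] by simp
        finally show ?thesis using w 2 by simp
      qed
    qed
  qed
  have "{t1<..Suc t1} = {Suc t1}" by auto
  then show "competitive_ineq K2 T2 SEL2 2 d t1 t2"
    unfolding competitive_ineq_def t2 using main sel unfolding D_def D'_def P_def P'_def by simp
qed

lemma notA2: "\<not> chase_A K2 T2 F2 SEL2"
proof
  assume A: "chase_A K2 T2 F2 SEL2"
  define d0 :: "nat \<Rightarrow> (real, real) datum" where "d0 = (\<lambda>t. (t, 0, 0, 0))"
  have cons: "consistent (gA UNIV) (stream_data d0 t)" for t
    unfolding consistent_def gA_def stream_data_def d0_def by auto
  have "(10::real) \<in> K2" using S2_K2 unfolding S2_def by auto
  then have "gA UNIV \<in> F2" unfolding F2_def using gA_T2_far[of 10 UNIV] by auto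
  then have adm: "admissible_stream F2 d0" unfolding admissible_stream_def using cons by blast
  have Z: "ZZ (stream_data d0 t) = {1..t}" for t unfolding ZZ_def stream_data_def d0_def by auto
  have seq: "SEL2 (stream_data d0 t) = sig t" for t using SEL2_eq[OF cons] Z by simp
  have "convergent (\<lambda>t. SEL2 (stream_data d0 t))" using A adm unfolding chase_A_def by blast
  then obtain L where L: "(\<lambda>t. sig t) \<longlonglongrightarrow> L" unfolding convergent_def seq by blast
  define r where "r J = 2 * BB J - 1" for J
  have rmono: "strict_mono r" unfolding strict_mono_Suc_iff r_def
  proof
    fix J
    have "2 * BB J \<le> BB (Suc J)" by (rule BB_Suc_ge)
    then show "2 * BB J - 1 < 2 * BB (Suc J) - 1" using BB_ge2[of J] by linarith
  qed
  have sm1: "strict_mono (\<lambda>i. r (2 * i))" unfolding strict_mono_Suc_iff using rmono by (simp add: strict_mono_less)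
  have sm2: "strict_mono (\<lambda>i. r (2 * i + 1))" unfolding strict_mono_Suc_iff using rmono by (simp add: strict_mono_less)
  have "((\<lambda>t. sig t) \<circ> (\<lambda>i. r (2 * i))) \<longlonglongrightarrow> L" by (rule LIMSEQ_subseq_LIMSEQ[OF L sm1])
  moreover have "((\<lambda>t. sig t) \<circ> (\<lambda>i. r (2 * i))) = (\<lambda>i. 11)"
    unfolding r_def o_def sig_block by simp
  ultimately have L11: "L = 11" by (simp add: LIMSEQ_const_iff)
  have "((\<lambda>t. sig t) \<circ> (\<lambda>i. r (2 * i + 1))) \<longlonglongrightarrow> L" by (rule LIMSEQ_subseq_LIMSEQ[OF L sm2])
  moreover have "((\<lambda>t. sig t) \<circ> (\<lambda>i. r (2 * i + 1))) = (\<lambda>i. 10)"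
    unfolding r_def o_def sig_block by simp
  ultimately have L10: "L = 10" by (simp add: LIMSEQ_const_iff)
  from L11 L10 show False by simp
qed

lemma B2: "chase_B K2 T2 F2 SEL2"
  by (rule D_imp_B[OF cp2 sel2 D2])

lemma notC2: "\<not> chase_C K2 T2 F2 SEL2"
  using C_imp_A[OF cp2 sel2] notA2 by blast

theorem corollary1:
  shows "(\<forall>(K::'k::metric_space set) (T::'k \<Rightarrow> ('x,'u) dynfun set) F SEL.
            compact_parametrization K T F \<and> is_selection K T SEL \<longrightarrow>
              (chase_C K T F SEL \<longrightarrow> chase_A K T F SEL) \<and>
              (chase_C K T F SEL \<longrightarrow> chase_D K T F SEL) \<and>
              (chase_A K T F SEL \<longrightarrow> chase_B K T F SEL) \<and>
              (chase_D K T F SEL \<longrightarrow> chase_B K T F SEL))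
       \<and> (\<forall>(X, Y) \<in> {(chase_A, chase_C), (chase_A, chase_D),
                     (chase_B, chase_A), (chase_B, chase_C), (chase_B, chase_D),
                     (chase_D, chase_A), (chase_D, chase_C)}.
            \<exists>(K::real set) (T::real \<Rightarrow> (real,real) dynfun set) F SEL.
              compact_parametrization K T F \<and> is_selection K T SEL \<and>
              X K T F SEL \<and> \<not> Y K T F SEL)"
proof (intro conjI)
  show "\<forall>(K::'k::metric_space set) (T::'k \<Rightarrow> ('x,'u) dynfun set) F SEL.
            compact_parametrization K T F \<and> is_selection K T SEL \<longrightarrow>
              (chase_C K T F SEL \<longrightarrow> chase_A K T F SEL) \<and>
              (chase_C K T F SEL \<longrightarrow> chase_D K T F SEL) \<and>
              (chase_A K T F SEL \<longrightarrow> chase_B K T F SEL) \<and>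
              (chase_D K T F SEL \<longrightarrow> chase_B K T F SEL)"
  proof (intro allI impI)
    fix K :: "'k::metric_space set" and T :: "'k \<Rightarrow> ('x,'u) dynfun set"
      and F :: "('x,'u) dynfun set" and SEL :: "('x,'u) datum set \<Rightarrow> 'k"
    assume h: "compact_parametrization K T F \<and> is_selection K T SEL"
    then have h1: "compact_parametrization K T F" and h2: "is_selection K T SEL" by auto
    show "(chase_C K T F SEL \<longrightarrow> chase_A K T F SEL) \<and>
              (chase_C K T F SEL \<longrightarrow> chase_D K T F SEL) \<and>
              (chase_A K T F SEL \<longrightarrow> chase_B K T F SEL) \<and>
              (chase_D K T F SEL \<longrightarrow> chase_B K T F SEL)"
      using C_imp_A[OF h1 h2] C_imp_D[of K T F SEL] A_imp_B[of K T F SEL] D_imp_B[OF h1 h2] by blast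
  qed
next
  have B1: "chase_B K1 T1 F1 SEL1" by (rule A_imp_B[OF A1])
  have notC1: "\<not> chase_C K1 T1 F1 SEL1" using C_imp_D notD1 by blast
  have ex1: "\<exists>(K::real set) (T::real \<Rightarrow> (real,real) dynfun set) F SEL.
              compact_parametrization K T F \<and> is_selection K T SEL \<and> X K T F SEL \<and> \<not> Y K T F SEL"
    if "X K1 T1 F1 SEL1" "\<not> Y K1 T1 F1 SEL1" for X Y
    using cp1 sel1 that by blast
  have ex2: "\<exists>(K::real set) (T::real \<Rightarrow> (real,real) dynfun set) F SEL.
              compact_parametrization K T F \<and> is_selection K T SEL \<and> X K T F SEL \<and> \<not> Y K T F SEL"
    if "X K2 T2 F2 SEL2" "\<not> Y K2 T2 F2 SEL2" for X Y
    using cp2 sel2 that by blast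
  show "\<forall>(X, Y) \<in> {(chase_A, chase_C), (chase_A, chase_D),
                     (chase_B, chase_A), (chase_B, chase_C), (chase_B, chase_D),
                     (chase_D, chase_A), (chase_D, chase_C)}.
            \<exists>(K::real set) (T::real \<Rightarrow> (real,real) dynfun set) F SEL.
              compact_parametrization K T F \<and> is_selection K T SEL \<and>
              X K T F SEL \<and> \<not> Y K T F SEL"
    using ex1[of chase_A chase_C, OF A1 notC1] ex1[of chase_A chase_D, OF A1 notD1]
      ex2[of chase_B chase_A, OF B2 notA2] ex1[of chase_B chase_C, OF B1 notC1]
      ex1[of chase_B chase_D, OF B1 notD1]
      ex2[of chase_D chase_A, OF D2 notA2] ex2[of chase_D chase_C, OF D2 notC2]
    by auto
qed

end
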